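(* Let $\mathcal{X}$ be an input space, $\mathcal{Y}=\{1,\dots,C\}$ a finite label set, and $\mathcal{D}$ a distribution on $\mathcal{X}\times\mathcal{Y}$; probabilities and expectations are over $(x,y)\sim\mathcal{D}$. Let $\mathcal{F},\mathcal{G}$ be classification models with differentiable model-dependent losses $\ell_{\mathcal{F}},\ell_{\mathcal{G}}:\mathcal{X}\times\mathcal{Y}\to\mathbb{R}_{\ge0}$ such that $\mathcal{F}(x)=\arg\min_y\ell_{\mathcal{F}}(x,y)$, $\mathcal{G}(x)=\arg\min_y\ell_{\mathcal{G}}(x,y)$. Assume both are $\beta$-smooth with gradient magnitude bounded by $B$: $\|\nabla_x\ell_{\mathcal{F}}(x,y)\|\le B$ and $\|\nabla_x\ell_{\mathcal{G}}(x,y)\|\le B$ for all $x\in\mathcal{X},y\in\mathcal{Y}$. Let $\mathcal{A}_T$ be an $(\alpha,\mathcal{F})$-effective targeted attack with perturbation ball $\|\delta\|_2\le\epsilon$ and target label $y_t\in\mathcal{Y}$. Then $$\Pr\big(T_r(\mathcal{F},\mathcal{G},x,y_t)=1\big)\le\frac{\xi_{\mathcal{F}}+\xi_{\mathcal{G}}}{\ell_{\min}-\epsilon B\left(1+\sqrt{\frac{1+\overline{\mathcal{S}}(\ell_{\mathcal{F}},\ell_{\mathcal{G}})}{2}}\right)-\beta\epsilon^2},\qquad \ell_{\min}=\min_{x\in\mathcal{X}}\big(\ell_{\mathcal{F}}(x,y_t),\ell_{\mathcal{G}}(x,y_t)\big),$$ where $\xi_{\mathcal{F}},\xi_{\mathcal{G}}$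 are the empirical risks of $\mathcal{F}$ and $\mathcal{G}$.
   Context: Empirical risk: $\xi_{\mathcal{F}}=\mathbb{E}[\ell_{\mathcal{F}}(x,y)]$ (similarly $\xi_{\mathcal{G}}$). A model $\mathcal{F}$ is $\beta$-smooth if $\sup_{x_1,x_2\in\mathcal{X},y\in\mathcal{Y}}\frac{\|\nabla_x\ell_{\mathcal{F}}(x_1,y)-\nabla_x\ell_{\mathcal{F}}(x_2,y)\|_2}{\|x_1-x_2\|_2}\le\beta$. A targeted attack with target $y_t$ maps $x$ to $\mathcal{A}_T(x)=x+\delta$ with $\|\delta\|_2\le\epsilon$; it is $(\alpha,\mathcal{F})$-effective if $\Pr(\mathcal{F}(\mathcal{A}_T(x))=y_t)\ge1-\alpha$. Upper loss gradient similarity: $\overline{\mathcal{S}}(\ell_{\mathcal{F}},\ell_{\mathcal{G}})=\sup_{x\in\mathcal{X},y\in\mathcal{Y}}\frac{\nabla_x\ell_{\mathcal{F}}(x,y)\cdot\nabla_x\ell_{\mathcal{G}}(x,y)}{\|\nabla_x\ell_{\mathcal{F}}(x,y)\|_2\|\nabla_x\ell_{\mathcal{G}}(x,y)\|_2}$. Targeted transferability at benign $x$ with true label $y$: $T_r(\mathcal{F},\mathcal{G},x,y_t)=\mathbb{I}[\mathcal{F}(x)=\mathcal{G}(x)=y\ \wedge\ \mathcal{F}(\mathcal{A}_T(x))=\mathcal{G}(\mathcal{A}_T(x))=y_t]$. *)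

theory Defs
  imports "HOL-Probability.Probability"
begin

definition is_input_gradient :: "('x::euclidean_space \<Rightarrow> 'y \<Rightarrow> real) \<Rightarrow> ('x \<Rightarrow> 'y \<Rightarrow> 'x) \<Rightarrow> bool" where
  "is_input_gradient l g \<longleftrightarrow>
     (\<forall>x y. ((\<lambda>z. l z y) has_derivative (\<lambda>h. g x y \<bullet> h)) (at x))"

definition beta_smooth :: "real \<Rightarrow> ('x::euclidean_space \<Rightarrow> 'y \<Rightarrow> 'x) \<Rightarrow> bool" where
  "beta_smooth \<beta> g \<longleftrightarrow>
     (\<forall>x1 x2 y. x1 \<noteq> x2 \<longrightarrow> norm (g x1 y - g x2 y) / norm (x1 - x2) \<le> \<beta>)"

definition upper_grad_sim :: "('x::euclidean_space \<Rightarrow> 'y \<Rightarrow> 'x) \<Rightarrow> ('x \<Rightarrow> 'y \<Rightarrow> 'x) \<Rightarrow> real" where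
  "upper_grad_sim gF gG =
     (SUP p\<in>(UNIV :: ('x \<times> 'y) set).
        (gF (fst p) (snd p) \<bullet> gG (fst p) (snd p)) /
        (norm (gF (fst p) (snd p)) * norm (gG (fst p) (snd p))))"

definition emp_risk :: "('x \<times> 'y) measure \<Rightarrow> ('x \<Rightarrow> 'y \<Rightarrow> real) \<Rightarrow> real" where
  "emp_risk D l = (\<integral>p. l (fst p) (snd p) \<partial>D)"

definition is_argmin_model :: "('x \<Rightarrow> 'y) \<Rightarrow> ('x \<Rightarrow> 'y \<Rightarrow> real) \<Rightarrow> bool" where
  "is_argmin_model F l \<longleftrightarrow> (\<forall>x y. l x (F x) \<le> l x y)"

definition targeted_attack :: "real \<Rightarrow> ('x::real_normed_vector \<Rightarrow> 'x) \<Rightarrow> bool" where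
  "targeted_attack \<epsilon> A \<longleftrightarrow> (\<forall>x. norm (A x - x) \<le> \<epsilon>)"

definition effective_attack ::
  "('x \<times> 'y) measure \<Rightarrow> real \<Rightarrow> ('x \<Rightarrow> 'y) \<Rightarrow> ('x \<Rightarrow> 'x) \<Rightarrow> 'y \<Rightarrow> bool" where
  "effective_attack D \<alpha> F A yt \<longleftrightarrow>
     prob_space.prob D {p \<in> space D. F (A (fst p)) = yt} \<ge> 1 - \<alpha>"

definition transferability ::
  "('x \<Rightarrow> 'y) \<Rightarrow> ('x \<Rightarrow> 'y) \<Rightarrow> ('x \<Rightarrow> 'x) \<Rightarrow> 'x \<Rightarrow> 'y \<Rightarrow> 'y \<Rightarrow> real" where
  "transferability F G A x y yt =
     (if F x = y \<and> G x = y \<and> F (A x) = yt \<and> G (A x) = yt then 1 else 0)"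

definition l_min :: "('x \<Rightarrow> 'y \<Rightarrow> real) \<Rightarrow> ('x \<Rightarrow> 'y \<Rightarrow> real) \<Rightarrow> 'y \<Rightarrow> real" where
  "l_min lF lG yt = (INF x. min (lF x yt) (lG x yt))"

end

theory Submission
  imports Defs
begin

lemma cos_bounds:
  fixes a b :: "'x::euclidean_space"
  shows "\<bar>(a \<bullet> b) / (norm a * norm b)\<bar> \<le> 1"
proof (cases "norm a * norm b = 0")
  case True then show ?thesis by auto
next
  case False
  then have p: "norm a * norm b > 0" by (simp add: zero_less_mult_iff)
  have "\<bar>a \<bullet> b\<bar> \<le> norm a * norm b" by (rule Cauchy_Schwarz_ineq2)
  then show ?thesis using p by (simp add: abs_divide divide_le_eq_1)
qed

lemma usim_ge:
  fixes gF gG :: "'x::euclidean_space \<Rightarrow> 'y \<Rightarrow> 'x"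
  shows "-1 \<le> upper_grad_sim gF gG"
proof -
  let ?f = "\<lambda>p. (gF (fst p) (snd p) \<bullet> gG (fst p) (snd p)) /
        (norm (gF (fst p) (snd p)) * norm (gG (fst p) (snd p)))"
  have bdd: "bdd_above (range ?f)"
    by (rule bdd_aboveI[where M=1]) (use cos_bounds abs_le_D1 in blast)
  obtain p :: "'x \<times> 'y" where True by simp
  have "\<bar>?f p\<bar> \<le> 1" by (rule cos_bounds)
  then have "-1 \<le> ?f p" by (simp only: abs_le_iff) linarith
  also have "\<dots> \<le> upper_grad_sim gF gG" unfolding upper_grad_sim_def by (rule cSUP_upper[OF _ bdd]) simp
  finally show ?thesis .
qed

lemma lip_bound:
  fixes l :: "'x::euclidean_space \<Rightarrow> 'y \<Rightarrow> real"
  assumes "is_input_gradient l g" and "\<forall>x y. norm (g x y) \<le> B"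
  shows "norm (l a y - l b y) \<le> B * norm (a - b)"
proof (rule differentiable_bound[where S=UNIV and f="\<lambda>z. l z y" and f'="\<lambda>x h. g x y \<bullet> h"])
  fix x :: 'x
  show "((\<lambda>z. l z y) has_derivative (\<lambda>h. g x y \<bullet> h)) (at x within UNIV)"
    using assms(1) unfolding is_input_gradient_def by simp
  have B0: "0 \<le> B" using assms(2) norm_ge_zero order_trans by blast
  show "onorm (\<lambda>h. g x y \<bullet> h) \<le> B"
  proof (rule onorm_bound[OF B0])
    fix h :: 'x
    have "norm (g x y \<bullet> h) \<le> norm (g x y) * norm h" by (simp add: Cauchy_Schwarz_ineq2)
    also have "\<dots> \<le> B * norm h" using assms(2) by (simp add: mult_right_mono)
    finally show "norm (g x y \<bullet> h) \<le> B * norm h" .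
  qed
qed auto

theorem theorem3:
  fixes D :: "('x::euclidean_space \<times> 'y::finite) measure"
    and lF lG :: "'x \<Rightarrow> 'y \<Rightarrow> real"
    and gF gG :: "'x \<Rightarrow> 'y \<Rightarrow> 'x"
    and F G :: "'x \<Rightarrow> 'y"
    and A :: "'x \<Rightarrow> 'x"
    and yt :: 'y
    and \<alpha> \<beta> B \<epsilon> :: real
  assumes "prob_space D"
    and "integrable D (\<lambda>p. lF (fst p) (snd p))"
    and "integrable D (\<lambda>p. lG (fst p) (snd p))"
    and "\<forall>x y. lF x y \<ge> 0" and "\<forall>x y. lG x y \<ge> 0"
    and "is_input_gradient lF gF" and "is_input_gradient lG gG"
    and "is_argmin_model F lF" and "is_argmin_model G lG"
    and "beta_smooth \<beta> gF" and "beta_smooth \<beta> gG"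
    and "\<forall>x y. norm (gF x y) \<le> B" and "\<forall>x y. norm (gG x y) \<le> B"
    and "targeted_attack \<epsilon> A"
    and "effective_attack D \<alpha> F A yt"
    and "l_min lF lG yt - \<epsilon> * B * (1 + sqrt ((1 + upper_grad_sim gF gG) / 2)) - \<beta> * \<epsilon>\<^sup>2 > 0"
  shows "prob_space.prob D {p \<in> space D. transferability F G A (fst p) (snd p) yt = 1}
     \<le> (emp_risk D lF + emp_risk D lG) /
        (l_min lF lG yt - \<epsilon> * B * (1 + sqrt ((1 + upper_grad_sim gF gG) / 2)) - \<beta> * \<epsilon>\<^sup>2)"
proof -
  interpret P: prob_space D by fact
  define K where "K = l_min lF lG yt - \<epsilon> * B * (1 + sqrt ((1 + upper_grad_sim gF gG) / 2)) - \<beta> * \<epsilon>\<^sup>2"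
  define E where "E = {p \<in> space D. transferability F G A (fst p) (snd p) yt = 1}"
  have K0: "K > 0" using assms(16) K_def by simp
  have eps0: "0 \<le> \<epsilon>" using assms(14) unfolding targeted_attack_def by (meson norm_ge_zero order_trans)
  have B0: "0 \<le> B" using assms(12) norm_ge_zero order_trans by blast
  have beta0: "0 \<le> \<beta>"
  proof -
    obtain v :: 'x where "v \<noteq> 0" using nonzero_Basis by blast
    then show ?thesis using assms(10) unfolding beta_smooth_def
      by (metis (no_types) diff_self divide_nonneg_nonneg norm_ge_zero order_trans)
  qed
  have bdd: "bdd_below (range (\<lambda>x. min (lF x yt) (lG x yt)))"
    using assms(4,5) by (intro bdd_belowI[where m=0]) auto
  have lmF: "l_min lF lG yt \<le> lF x yt" for x
    unfolding l_min_def by (rule order_trans[OF cINF_lower[OF bdd, of x]]) auto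
  have lmG: "l_min lF lG yt \<le> lG x yt" for x
    unfolding l_min_def by (rule order_trans[OF cINF_lower[OF bdd, of x]]) auto
  have sq0: "0 \<le> sqrt ((1 + upper_grad_sim gF gG) / 2)" using usim_ge[of gF gG] by simp
  have pt: "K \<le> lF x y + lG x y" if "transferability F G A x y yt = 1" for x y
  proof -
    have h: "F x = y" "G x = y" "F (A x) = yt" "G (A x) = yt"
      using that unfolding transferability_def by (auto split: if_splits)
    have nd: "norm (A x - x) \<le> \<epsilon>" using assms(14) unfolding targeted_attack_def by blast
    have "lF (A x) y - lF x y \<le> B * norm (A x - x)"
      using lip_bound[OF assms(6,12), of "A x" y x] by simp
    also have "\<dots> \<le> B * \<epsilon>" using nd B0 by (simp add: mult_left_mono)
    finally have f1: "lF (A x) y - lF x y \<le> B * \<epsilon>" .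
    have "lG (A x) y - lG x y \<le> B * norm (A x - x)"
      using lip_bound[OF assms(7,13), of "A x" y x] by simp
    also have "\<dots> \<le> B * \<epsilon>" using nd B0 by (simp add: mult_left_mono)
    finally have g1: "lG (A x) y - lG x y \<le> B * \<epsilon>" .
    have f2: "lF (A x) yt \<le> lF (A x) y" using assms(8) h unfolding is_argmin_model_def by metis
    have g2: "lG (A x) yt \<le> lG (A x) y" using assms(9) h unfolding is_argmin_model_def by metis
    have "0 \<le> \<epsilon> * B * sqrt ((1 + upper_grad_sim gF gG) / 2)" using eps0 B0 sq0 by simp
    moreover have "0 \<le> \<beta> * \<epsilon>\<^sup>2" using beta0 by simp
    moreover have "\<epsilon> * B * (1 + sqrt ((1 + upper_grad_sim gF gG) / 2)) = B * \<epsilon> + \<epsilon> * B * sqrt ((1 + upper_grad_sim gF gG) / 2)"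
      by (simp add: algebra_simps)
    ultimately show ?thesis using K0 unfolding K_def
      using f1 g1 f2 g2 lmF[of "A x"] lmG[of "A x"] by linarith
  qed
  have int0: "0 \<le> emp_risk D lF + emp_risk D lG"
    unfolding emp_risk_def using assms(4,5) by (intro add_nonneg_nonneg integral_nonneg_AE) auto
  have "P.prob E * K \<le> emp_risk D lF + emp_risk D lG"
  proof (cases "E \<in> sets D")
    case True
    have "P.prob E * K = (\<integral>p. indicator E p * K \<partial>D)" using True by simp
    also have "\<dots> \<le> (\<integral>p. lF (fst p) (snd p) + lG (fst p) (snd p) \<partial>D)"
    proof (rule integral_mono)
      show "integrable D (\<lambda>p. indicator E p * K)" using True by (intro integrable_mult_left integrable_real_indicator) (simp_all add: P.emeasure_finite top.not_eq_extremum[symmetric])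
      show "integrable D (\<lambda>p. lF (fst p) (snd p) + lG (fst p) (snd p))" using assms(2,3) by simp
      fix p assume "p \<in> space D"
      then show "indicator E p * K \<le> lF (fst p) (snd p) + lG (fst p) (snd p)"
        using pt[of "fst p" "snd p"] assms(4,5) unfolding E_def
        by (cases "p \<in> E") (auto simp: E_def add_nonneg_nonneg)
    qed
    also have "\<dots> = emp_risk D lF + emp_risk D lG"
      unfolding emp_risk_def using assms(2,3) by simp
    finally show ?thesis .
  next
    case False
    then show ?thesis using int0 by (simp add: measure_notin_sets)
  qed
  then show ?thesis using K0 unfolding K_def[symmetric] E_def[symmetric]
    by (simp add: pos_le_divide_eq)
qed

end
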